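(* Let $R\ge1$, $k\in\mathbb N$ and $a,b\in B^{\omega_k}_R(e)\cap\mathcal B^{\mathbb C}_{TM}$. Let $0<\varepsilon<1$ with $\|a\|_{\omega_k}+\|b\|_{\omega_k}+2\varepsilon<R$, and let $c,d\in\mathbb C^{\mathcal T_0}(\omega_k)$ with $c(\emptyset)=d(\emptyset)=0$ and $\|c\|_{\omega_k},\|d\|_{\omega_k}<\varepsilon$. Then $a+c,\,b+d\in\mathcal B^{\mathbb C}_{TM}$ and for every $\tau\in\mathcal T$ $$\big|\big((a+c)\cdot(b+d)-a\cdot b\big)(\tau)\big|\le 2\varepsilon\,\frac{(4R)^{|\tau|}}{\omega_k(\tau)}.$$
   Context: $\mathcal T$ is the set of rooted trees (at least one vertex), $\mathcal T_0=\mathcal T\cup\{\emptyset\}$, $|\tau|$ the number of vertices. $\mathrm{OST}(\tau)$ is the set of ordered subtrees (vertex subsets connected by edges of $\tau$ and containing the root if nonempty), $s_\tau$ the induced rooted tree, $\tau\setminus s$ the forest obtained by deleting $s$ and adjacent edges. $\mathcal B^{\mathbb C}_{TM}$ is the set of $a\colon\mathcal T_0\to\mathbb C$ with $a(\emptyset)=1$ and $|a(\tau)|\le CK^{|\tau|}$ for some $C,K>0$, with product $(a\cdot b)(\tau)=\sum_{s\in\mathrm{OST}(\tau)}b(s_\tau)\prod_{\theta\in\tau\setminus s}a(\theta)$ and unit $e$ ($e(\emptyset)=1$, else $0$). $\omega_k(\tau)=2^{-k|\tau|}$, $\mathbb C^{\mathcal T_0}(\omega_k)=\{a\mid\|a\|_{\omega_k}:=\sup_{\tau\in\mathcal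 T_0}|a(\tau)|\omega_k(\tau)<\infty\}$, and $B^{\omega_k}_R(x)$ is the open $R$-ball about $x$ in this Banach space. *)

theory Defs
  imports Complex_Main "HOL-Library.Multiset"
begin

text \<open>Rooted trees are represented by planar representatives; the paper's rooted
  trees are their isomorphism classes (children unordered). Functions on
  \<open>T_0\<close> are represented by isomorphism-invariant functions on
  \<open>ptree option\<close>, where \<open>None\<close> is the empty tree.\<close>

datatype ptree = PNode "ptree list"

inductive tiso :: "ptree \<Rightarrow> ptree \<Rightarrow> bool" where
  "list_all2 tiso ts us \<Longrightarrow> mset us = mset vs \<Longrightarrow> tiso (PNode ts) (PNode vs)"

definition tm_inv :: "(ptree option \<Rightarrow> 'b) \<Rightarrow> bool" where
  "tm_inv f \<longleftrightarrow> (\<forall>x y. tiso x y \<longrightarrow> f (Some x) = f (Some y))"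

fun tsize :: "ptree \<Rightarrow> nat" where
  "tsize (PNode ts) = 1 + sum_list (map tsize ts)"

definition osize :: "ptree option \<Rightarrow> nat" where
  "osize t = (case t of None \<Rightarrow> 0 | Some s \<Rightarrow> tsize s)"

text \<open>All ordered subtrees \<open>s\<close> of a tree (one entry per admissible vertex subset),
  together with the forest \<open>\<tau> \<setminus> s\<close>.\<close>
fun cuts :: "ptree \<Rightarrow> (ptree option \<times> ptree list) list" where
  "cuts (PNode ts) = (None, [PNode ts]) #
     map (\<lambda>cs. (Some (PNode (List.map_filter fst cs)), concat (map snd cs)))
         (product_lists (map cuts ts))"

definition tm_prod :: "(ptree option \<Rightarrow> complex) \<Rightarrow> (ptree option \<Rightarrow> complex) \<Rightarrow> ptree option \<Rightarrow> complex" where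
  "tm_prod a b t = (case t of None \<Rightarrow> b None
     | Some \<tau> \<Rightarrow> sum_list (map (\<lambda>(s, F). b s * prod_list (map (\<lambda>\<theta>. a (Some \<theta>)) F)) (cuts \<tau>)))"

definition tm_unit :: "ptree option \<Rightarrow> complex" where
  "tm_unit t = (if t = None then 1 else 0)"

definition BTM :: "(ptree option \<Rightarrow> complex) set" where
  "BTM = {a. tm_inv a \<and> a None = 1 \<and>
     (\<exists>C K. C > 0 \<and> K > 0 \<and> (\<forall>t. cmod (a t) \<le> C * K ^ osize t))}"

definition omega :: "nat \<Rightarrow> ptree option \<Rightarrow> real" where
  "omega k t = 1 / 2 ^ (k * osize t)"

definition in_space :: "nat \<Rightarrow> (ptree option \<Rightarrow> complex) \<Rightarrow> bool" where
  "in_space k a \<longleftrightarrow> tm_inv a \<and> bdd_above (range (\<lambda>t. cmod (a t) * omega k t))"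

definition wnorm :: "nat \<Rightarrow> (ptree option \<Rightarrow> complex) \<Rightarrow> real" where
  "wnorm k a = (SUP t. cmod (a t) * omega k t)"

definition wball :: "nat \<Rightarrow> real \<Rightarrow> (ptree option \<Rightarrow> complex) \<Rightarrow> (ptree option \<Rightarrow> complex) set" where
  "wball k R x = {y. in_space k y \<and> wnorm k (\<lambda>t. y t - x t) < R}"

end

theory Submission
  imports Defs
begin

lemma tsize_pos: "tsize t \<ge> 1"
  by (cases t) simp

lemma foldr_le: "(\<forall>x\<in>set xs. (f x::nat) \<le> g x) \<Longrightarrow> foldr (*) (map f xs) 1 \<le> foldr (*) (map g xs) 1"
  by (induct xs) (auto intro: mult_le_mono)

lemma foldr_pow: "foldr (*) (map (\<lambda>t. (2::nat) ^ h t) xs) 1 = 2 ^ sum_list (map h xs)"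
  by (induct xs) (auto simp: power_add)

lemma length_cuts: "length (cuts t) \<le> 2 ^ tsize t"
proof (induct t)
  case (PNode ts)
  have "length (product_lists (map cuts ts)) = foldr (*) (map length (map cuts ts)) 1"
    by (rule length_product_lists)
  also have "\<dots> = foldr (*) (map (\<lambda>t. length (cuts t)) ts) 1" by (simp add: o_def)
  also have "\<dots> \<le> foldr (*) (map (\<lambda>t. (2::nat) ^ tsize t) ts) 1"
    using PNode by (intro foldr_le) auto
  also have "\<dots> = 2 ^ sum_list (map tsize ts)" by (rule foldr_pow)
  finally have "length (cuts (PNode ts)) \<le> 1 + 2 ^ sum_list (map tsize ts)" by simp
  also have "\<dots> \<le> 2 ^ tsize (PNode ts)" by simp
  finally show ?case .
qed

lemma mf_size: "sum_list (map tsize (List.map_filter fst cs)) = sum_list (map (\<lambda>c. osize (fst c)) cs)"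
  by (induct cs) (auto simp: List.map_filter_def osize_def split: option.splits)

lemma sl_concat: "sum_list (map tsize (concat (map snd cs))) = sum_list (map (\<lambda>c. sum_list (map tsize (snd c))) cs)"
  by (induct cs) auto

lemma la2_sum: "list_all2 (\<lambda>x ys. x \<in> set ys) cs xss \<Longrightarrow> xss = map cuts ts \<Longrightarrow>
  (\<forall>t\<in>set ts. \<forall>p\<in>set (cuts t). osize (fst p) + sum_list (map tsize (snd p)) = tsize t) \<Longrightarrow>
  sum_list (map (\<lambda>c. osize (fst c) + sum_list (map tsize (snd c))) cs) = sum_list (map tsize ts)"
proof (induct cs arbitrary: xss ts)
  case Nil then show ?case by auto
next
  case (Cons c cs)
  then obtain t ts' where "ts = t # ts'" by (cases ts) auto
  with Cons show ?case by auto
qed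

lemma cuts_size: "p \<in> set (cuts t) \<Longrightarrow> osize (fst p) + sum_list (map tsize (snd p)) = tsize t"
proof (induct t arbitrary: p)
  case (PNode ts)
  show ?case
  proof (cases "p = (None, [PNode ts])")
    case True then show ?thesis by (simp add: osize_def)
  next
    case False
    with PNode.prems obtain cs where cs: "cs \<in> set (product_lists (map cuts ts))"
      and p: "p = (Some (PNode (List.map_filter fst cs)), concat (map snd cs))" by auto
    from cs have la: "list_all2 (\<lambda>x ys. x \<in> set ys) cs (map cuts ts)" by (simp add: product_lists_set)
    have "sum_list (map (\<lambda>c. osize (fst c) + sum_list (map tsize (snd c))) cs) = sum_list (map tsize ts)"
      using la PNode.hyps by (intro la2_sum[OF la refl]) auto
    then show ?thesis using p by (simp add: osize_def mf_size sl_concat sum_list_addf)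
  qed
qed

lemma cuts_none: "p \<in> set (cuts t) \<Longrightarrow> fst p = None \<Longrightarrow> snd p = [t]"
  by (cases t) auto

lemma prod_bound:
  assumes "\<forall>i\<in>set L. cmod (y i) \<le> M * w i" "M \<ge> 0"
  shows "cmod (prod_list (map y L)) \<le> M ^ length L * prod_list (map w L)"
  using assms
proof (induct L)
  case Nil then show ?case by simp
next
  case (Cons i L)
  have "cmod (prod_list (map y (i # L))) = cmod (y i) * cmod (prod_list (map y L))"
    by (simp add: norm_mult)
  also have "\<dots> \<le> (M * w i) * (M ^ length L * prod_list (map w L))"
    using Cons by (intro mult_mono) (auto intro: order_trans[OF norm_ge_zero])
  finally show ?case by (simp add: algebra_simps)
qed

lemma prod_diff:
  assumes "\<forall>i\<in>set L. cmod (x i) \<le> M * w i \<and> cmod (y i) \<le> M * w i \<and> cmod (x i - y i) \<le> e * w i \<and> 0 \<le> w i"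
    "M \<ge> 1" "e \<ge> 0"
  shows "cmod (prod_list (map x L) - prod_list (map y L)) \<le> real (length L) * e * M ^ length L * prod_list (map w L)"
  using assms
proof (induct L)
  case Nil then show ?case by simp
next
  case (Cons i L)
  let ?P = "prod_list (map x L)" let ?Q = "prod_list (map y L)" let ?W = "prod_list (map w L)"
  let ?n = "length L"
  have W0: "?W \<ge> 0" using Cons.prems by (intro prod_list_nonneg) auto
  have wi: "w i \<ge> 0" using Cons.prems by auto
  have P: "cmod ?P \<le> M ^ ?n * ?W" using Cons.prems by (intro prod_bound) auto
  have IH: "cmod (?P - ?Q) \<le> real ?n * e * M ^ ?n * ?W" using Cons by auto
  have eq: "prod_list (map x (i # L)) - prod_list (map y (i # L)) = (x i - y i) * ?P + y i * (?P - ?Q)"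
    by (simp add: algebra_simps)
  have "cmod ((x i - y i) * ?P + y i * (?P - ?Q)) \<le> cmod (x i - y i) * cmod ?P + cmod (y i) * cmod (?P - ?Q)"
    by (metis norm_mult norm_triangle_ineq)
  also have "\<dots> \<le> (e * w i) * (M ^ ?n * ?W) + (M * w i) * (real ?n * e * M ^ ?n * ?W)"
    using Cons.prems P IH by (intro add_mono mult_mono) auto
  also have "\<dots> \<le> (e * w i) * (M ^ Suc ?n * ?W) + (M * w i) * (real ?n * e * M ^ ?n * ?W)"
  proof -
    have "M ^ ?n \<le> M ^ Suc ?n" using Cons.prems by (intro power_increasing) auto
    then show ?thesis using W0 wi Cons.prems by (intro add_mono mult_left_mono mult_right_mono) auto
  qed
  also have "\<dots> = real (length (i # L)) * e * M ^ length (i # L) * prod_list (map w (i # L))"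
    by (simp add: algebra_simps)
  finally show ?case using eq by simp
qed

lemma norm_sum_list_le:
  assumes "\<forall>p\<in>set xs. cmod (f p) \<le> B"
  shows "cmod (sum_list (map f xs)) \<le> real (length xs) * B"
  using assms
proof (induct xs)
  case Nil then show ?case by simp
next
  case (Cons p xs)
  have "cmod (sum_list (map f (p # xs))) \<le> cmod (f p) + cmod (sum_list (map f xs))"
    by (simp add: norm_triangle_ineq)
  also have "\<dots> \<le> B + real (length xs) * B" using Cons by (intro add_mono) auto
  finally show ?case by (simp add: algebra_simps)
qed

lemma prod_w: "prod_list (map (\<lambda>\<theta>. (2::real) ^ (k * tsize \<theta>)) F) = 2 ^ (k * sum_list (map tsize F))"
  by (induct F) (auto simp: power_add algebra_simps)

lemma len_le_sum: "length F \<le> sum_list (map tsize F)"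
proof (induct F)
  case (Cons a F) then show ?case using tsize_pos[of a] by simp
qed simp

lemma omega_eq: "omega k t = 1 / (2::real) ^ (k * osize t)"
  by (simp add: omega_def)

lemma pt_bound:
  assumes "in_space k a"
  shows "cmod (a t) \<le> wnorm k a * 2 ^ (k * osize t)"
proof -
  have "cmod (a t) * omega k t \<le> wnorm k a"
    unfolding wnorm_def using assms by (intro cSUP_upper) (auto simp: in_space_def)
  then show ?thesis by (simp add: omega_eq divide_simps)
qed

lemma wnorm_nonneg: "in_space k a \<Longrightarrow> wnorm k a \<ge> 0"
  using pt_bound[of k a None] by (auto simp: osize_def intro: order_trans[OF norm_ge_zero])

lemma sum_in_BTM:
  assumes "a \<in> BTM" "in_space k a" "in_space k c" "c None = 0" "wnorm k c < e" "e > 0"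
  shows "(\<lambda>t. a t + c t) \<in> BTM"
proof -
  have A: "wnorm k a \<ge> 0" using assms wnorm_nonneg by auto
  have "\<forall>t. cmod (a t + c t) \<le> (wnorm k a + e) * (2 ^ k) ^ osize t"
  proof
    fix t
    have "cmod (a t + c t) \<le> cmod (a t) + cmod (c t)" by (rule norm_triangle_ineq)
    also have "\<dots> \<le> wnorm k a * 2 ^ (k * osize t) + e * 2 ^ (k * osize t)"
      using pt_bound[OF assms(2)] pt_bound[OF assms(3), of t] assms(5)
      by (intro add_mono) (auto intro: order_trans mult_right_mono)
    finally show "cmod (a t + c t) \<le> (wnorm k a + e) * (2 ^ k) ^ osize t"
      by (simp add: algebra_simps power_mult)
  qed
  moreover have "wnorm k a + e > 0" using A assms by auto
  ultimately have "\<exists>C K. C > 0 \<and> K > 0 \<and> (\<forall>t. cmod (a t + c t) \<le> C * K ^ osize t)"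
    by (intro exI[of _ "wnorm k a + e"] exI[of _ "2^k"]) auto
  then show ?thesis using assms
    by (auto simp: BTM_def tm_inv_def in_space_def)
qed

theorem lemmaB3:
  fixes R \<epsilon> :: real and k :: nat and a b c d :: "ptree option \<Rightarrow> complex"
  assumes "R \<ge> 1"
    and "a \<in> wball k R tm_unit \<inter> BTM" and "b \<in> wball k R tm_unit \<inter> BTM"
    and "0 < \<epsilon>" and "\<epsilon> < 1"
    and "wnorm k a + wnorm k b + 2 * \<epsilon> < R"
    and "in_space k c" and "in_space k d"
    and "c None = 0" and "d None = 0"
    and "wnorm k c < \<epsilon>" and "wnorm k d < \<epsilon>"
  shows "(\<lambda>t. a t + c t) \<in> BTM \<and> (\<lambda>t. b t + d t) \<in> BTM \<and>
    (\<forall>\<tau>. cmod (tm_prod (\<lambda>t. a t + c t) (\<lambda>t. b t + d t) (Some \<tau>) - tm_prod a b (Some \<tau>))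
          \<le> 2 * \<epsilon> * (4 * R) ^ tsize \<tau> / omega k (Some \<tau>))"
proof -
  have ia: "in_space k a" and ib: "in_space k b" and aB: "a \<in> BTM" and bB: "b \<in> BTM"
    using assms(2,3) by (auto simp: wball_def)
  have a1: "a None = 1" and b1: "b None = 1" using aB bB by (auto simp: BTM_def)
  define A where "A = wnorm k a"
  define B where "B = wnorm k b"
  have A0: "A \<ge> 0" and B0: "B \<ge> 0" using ia ib wnorm_nonneg A_def B_def by auto
  define w where "w t = (2::real) ^ (k * osize t)" for t
  have w0: "w t \<ge> 0" for t by (simp add: w_def)
  have mono: "cmod x \<le> N * W \<Longrightarrow> N \<le> M \<Longrightarrow> 0 \<le> W \<Longrightarrow> cmod x \<le> M * W" for x N M W
    by (meson order_trans mult_right_mono)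
  have ba: "cmod (a t) \<le> R * w t" for t
    using mono[OF pt_bound[OF ia, of t], of R] A_def B_def A0 B0 assms(4,6) w0[of t] unfolding w_def by auto
  have bb: "cmod (b t) \<le> R * w t" for t
    using mono[OF pt_bound[OF ib, of t], of R] A_def B_def A0 B0 assms(4,6) w0[of t] unfolding w_def by auto
  have bc: "cmod (c t) \<le> \<epsilon> * w t" for t
    using mono[OF pt_bound[OF assms(7), of t], of \<epsilon>] assms(11) w0[of t] unfolding w_def by auto
  have bd: "cmod (d t) \<le> \<epsilon> * w t" for t
    using mono[OF pt_bound[OF assms(8), of t], of \<epsilon>] assms(12) w0[of t] unfolding w_def by auto
  have bac: "cmod (a t + c t) \<le> R * w t" for t
  proof -
    have "cmod (a t + c t) \<le> cmod (a t) + cmod (c t)" by (rule norm_triangle_ineq)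
    also have "\<dots> \<le> A * w t + \<epsilon> * w t"
      using pt_bound[OF ia, of t] bc[of t] A_def w_def by (intro add_mono) auto
    also have "\<dots> \<le> R * w t" using assms(4,6) B0 w0[of t] A_def B_def
      by (simp add: distrib_right[symmetric] mult_right_mono)
    finally show ?thesis .
  qed
  have bbd: "cmod (b t + d t) \<le> R * w t" for t
  proof -
    have "cmod (b t + d t) \<le> cmod (b t) + cmod (d t)" by (rule norm_triangle_ineq)
    also have "\<dots> \<le> B * w t + \<epsilon> * w t"
      using pt_bound[OF ib, of t] bd[of t] B_def w_def by (intro add_mono) auto
    also have "\<dots> \<le> R * w t" using assms(4,6) A0 w0[of t] A_def B_def
      by (simp add: distrib_right[symmetric] mult_right_mono)
    finally show ?thesis .
  qed
  have main: "cmod (tm_prod (\<lambda>t. a t + c t) (\<lambda>t. b t + d t) (Some \<tau>) - tm_prod a b (Some \<tau>))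
          \<le> 2 * \<epsilon> * (4 * R) ^ tsize \<tau> / omega k (Some \<tau>)" for \<tau>
  proof -
    define T where "T = tsize \<tau>"
    have T1: "T \<ge> 1" using tsize_pos T_def by auto
    define Dl where "Dl = (\<lambda>(s, F). (b s + d s) * prod_list (map (\<lambda>\<theta>. a (Some \<theta>) + c (Some \<theta>)) F)
        - b s * prod_list (map (\<lambda>\<theta>. a (Some \<theta>)) F))"
    have eq: "tm_prod (\<lambda>t. a t + c t) (\<lambda>t. b t + d t) (Some \<tau>) - tm_prod a b (Some \<tau>)
       = sum_list (map Dl (cuts \<tau>))"
      unfolding tm_prod_def Dl_def by (simp add: sum_list_subtractf[symmetric] case_prod_unfold)
    have trm: "cmod (Dl p) \<le> real T * \<epsilon> * R ^ T * 2 ^ (k * T)" if p: "p \<in> set (cuts \<tau>)" for p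
    proof (cases p)
      case (Pair s F)
      have sz: "osize s + sum_list (map tsize F) = T" using cuts_size[OF p] Pair T_def by simp
      show ?thesis
      proof (cases s)
        case None
        then have F: "F = [\<tau>]" using cuts_none[OF p] Pair by simp
        have "Dl p = c (Some \<tau>)" using Pair None F b1 assms(10) by (simp add: Dl_def algebra_simps)
        then have "cmod (Dl p) \<le> \<epsilon> * 2 ^ (k * T)" using bc[of "Some \<tau>"] by (simp add: w_def osize_def T_def)
        also have "\<dots> \<le> real T * \<epsilon> * R ^ T * 2 ^ (k * T)"
        proof -
          have "1 \<le> R ^ T" using assms(1) by simp
          moreover have "1 \<le> real T" using T1 by simp
          ultimately have "1 \<le> real T * R ^ T" by (metis mult_mono' mult_1 zero_le_one)
          then show ?thesis using assms(4) by (simp add: algebra_simps mult_right_mono[of 1, simplified] )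
        qed
        finally show ?thesis .
      next
        case (Some s')
        define L where "L = (True, s) # map (\<lambda>\<theta>. (False, Some \<theta>)) F"
        define X where "X = (\<lambda>(i::bool, u). if i then b u + d u else a u + c u)"
        define Y where "Y = (\<lambda>(i::bool, u). if i then b u else a u)"
        have DX: "Dl p = prod_list (map X L) - prod_list (map Y L)"
          using Pair by (simp add: Dl_def L_def X_def Y_def o_def)
        have hyp: "\<forall>i\<in>set L. cmod (X i) \<le> R * w (snd i) \<and> cmod (Y i) \<le> R * w (snd i) \<and>
               cmod (X i - Y i) \<le> \<epsilon> * w (snd i) \<and> 0 \<le> w (snd i)"
          using bac bbd ba bb bc bd w0 by (auto simp: L_def X_def Y_def)
        have "cmod (Dl p) \<le> real (length L) * \<epsilon> * R ^ length L * prod_list (map (\<lambda>i. w (snd i)) L)"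
          unfolding DX using prod_diff[OF hyp assms(1)] assms(4) by simp
        also have "prod_list (map (\<lambda>i. w (snd i)) L) = 2 ^ (k * T)"
        proof -
          have "prod_list (map (\<lambda>i. w (snd i)) L) = w s * prod_list (map (\<lambda>\<theta>. (2::real) ^ (k * tsize \<theta>)) F)"
            by (simp add: L_def o_def w_def osize_def)
          also have "\<dots> = 2 ^ (k * T)" unfolding prod_w w_def sz[symmetric]
            by (simp add: power_add algebra_simps)
          finally show ?thesis .
        qed
        also have "real (length L) * \<epsilon> * R ^ length L * 2 ^ (k * T) \<le> real T * \<epsilon> * R ^ T * 2 ^ (k * T)"
        proof -
          have "osize s \<ge> 1" using Some tsize_pos by (simp add: osize_def)
          then have lL: "length L \<le> T" using sz len_le_sum[of F] by (simp add: L_def)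
          have "R ^ length L \<le> R ^ T" using lL assms(1) by (intro power_increasing) auto
          moreover have "real (length L) \<le> real T" using lL by simp
          ultimately have "real (length L) * R ^ length L \<le> real T * R ^ T"
            using assms(1) by (intro mult_mono) auto
          then have "(real (length L) * R ^ length L) * (\<epsilon> * 2 ^ (k * T)) \<le> (real T * R ^ T) * (\<epsilon> * 2 ^ (k * T))"
            using assms(4) by (intro mult_right_mono) auto
          then show ?thesis by (simp add: algebra_simps)
        qed
        finally show ?thesis .
      qed
    qed
    have "cmod (sum_list (map Dl (cuts \<tau>))) \<le> real (length (cuts \<tau>)) * (real T * \<epsilon> * R ^ T * 2 ^ (k * T))"
      using trm by (intro norm_sum_list_le) auto
    also have "\<dots> \<le> 2 ^ T * (2 ^ T * \<epsilon> * R ^ T * 2 ^ (k * T))"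
    proof -
      have "real (length (cuts \<tau>)) \<le> 2 ^ T" using length_cuts[of \<tau>] T_def
        by (metis of_nat_le_iff of_nat_numeral of_nat_power)
      moreover have "real T \<le> 2 ^ T" using less_exp[of T]
        by (metis less_imp_le of_nat_le_iff of_nat_numeral of_nat_power)
      ultimately show ?thesis using assms(1,4)
        by (intro mult_mono) auto
    qed
    also have "\<dots> \<le> 2 * \<epsilon> * (4 * R) ^ T * 2 ^ (k * T)"
    proof -
      have "(2::real) ^ T * 2 ^ T = 4 ^ T" by (simp add: power_mult_distrib[symmetric])
      then have "2 ^ T * (2 ^ T * \<epsilon> * R ^ T * 2 ^ (k * T)) = \<epsilon> * (4 * R) ^ T * 2 ^ (k * T)"
        by (simp add: power_mult_distrib algebra_simps)
      then show ?thesis using assms(1,4) by simp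
    qed
    also have "\<dots> = 2 * \<epsilon> * (4 * R) ^ tsize \<tau> / omega k (Some \<tau>)"
      by (simp add: omega_eq osize_def T_def)
    finally show ?thesis using eq by simp
  qed
  show ?thesis
    using sum_in_BTM[OF aB ia assms(7,9,11,4)] sum_in_BTM[OF bB ib assms(8,10,12,4)] main by blast
qed

end
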